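(* Let $n\geq 2$. $\mathrm{Aut}(\mathbf{D}_n)$ acts continuously and transitively on $\mathcal{R}_n$ via the logic action $g\cdot(\prec_1,\ldots,\prec_n)=(\prec_1^g,\ldots,\prec_n^g)$, where $\mathbf{a}\prec_i^g\mathbf{b}$ iff $g^{-1}(\mathbf{a})\prec_ig^{-1}(\mathbf{b})$, for all $i\leq n$, $\mathbf{a},\mathbf{b}\in D_n$ and $g\in\mathrm{Aut}(\mathbf{D}_n)$ (in particular this action maps $\mathcal{R}_n$ into itself).
   Context: Fix $n\geq 2$ and a set $D_n\subseteq\mathbb{Q}^n$ which is dense in $\mathbb{Q}^n$ (product topology) and such that no two distinct points of $D_n$ share a common coordinate. $\mathbf{D}_n=(D_n,<)$ with $<$ the product order ($\mathbf{a}<\mathbf{b}$ iff $a_i\leq b_i$ for all $i$ and $\mathbf{a}\neq\mathbf{b}$); $\mathrm{Aut}(\mathbf{D}_n)$ carries the topology of pointwise convergence. $\mathcal{R}_n$ is the set of $n$-tuples $(\prec_1,\ldots,\prec_n)$ of strict linear orders on $D_n$ with $\prec_1\cap\cdots\cap\prec_n\;=\;<$, topologized as a subspace of $(\{0,1\}^{D_n^2})^n$. *)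

theory Defs
  imports "HOL-Analysis.Analysis"
begin

text \<open>Points of Q^n are functions from a finite index type 'n (with CARD('n) = n) to rat.\<close>

definition prod_less :: "('n \<Rightarrow> rat) \<Rightarrow> ('n \<Rightarrow> rat) \<Rightarrow> bool" where
  "prod_less a b \<longleftrightarrow> (\<forall>i. a i \<le> b i) \<and> a \<noteq> b"

definition prod_order_rel :: "('n \<Rightarrow> rat) set \<Rightarrow> ('n \<Rightarrow> rat) rel" where
  "prod_order_rel D = {(a, b). a \<in> D \<and> b \<in> D \<and> prod_less a b}"

definition dense_in_Qn :: "('n \<Rightarrow> rat) set \<Rightarrow> bool" where
  "dense_in_Qn D \<longleftrightarrow> (\<forall>a b. (\<forall>i. a i < b i) \<longrightarrow> (\<exists>d\<in>D. \<forall>i. a i < d i \<and> d i < b i))"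

definition no_common_coord :: "('n \<Rightarrow> rat) set \<Rightarrow> bool" where
  "no_common_coord D \<longleftrightarrow> (\<forall>x\<in>D. \<forall>y\<in>D. x \<noteq> y \<longrightarrow> (\<forall>i. x i \<noteq> y i))"

definition Aut :: "('n \<Rightarrow> rat) set \<Rightarrow> (('n \<Rightarrow> rat) \<Rightarrow> ('n \<Rightarrow> rat)) set" where
  "Aut D = {g. bij_betw g D D \<and> (\<forall>x. x \<notin> D \<longrightarrow> g x = x) \<and>
                (\<forall>a\<in>D. \<forall>b\<in>D. prod_less a b \<longleftrightarrow> prod_less (g a) (g b))}"

text \<open>Topology of pointwise convergence on Aut(D) (D discrete).\<close>
definition Aut_topology :: "('n \<Rightarrow> rat) set \<Rightarrow> (('n \<Rightarrow> rat) \<Rightarrow> ('n \<Rightarrow> rat)) topology" where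
  "Aut_topology D = pullback_topology (Aut D) (\<lambda>g. restrict g D)
      (product_topology (\<lambda>_. discrete_topology D) D)"

text \<open>Topology on relations on D, identified with {0,1}^(D^2) via indicator functions.\<close>
definition rel_topology :: "'a set \<Rightarrow> 'a rel topology" where
  "rel_topology D = pullback_topology {r. r \<subseteq> D \<times> D} (\<lambda>r. restrict (\<lambda>p. p \<in> r) (D \<times> D))
      (product_topology (\<lambda>_. discrete_topology UNIV) (D \<times> D))"

definition Rn :: "('n \<Rightarrow> rat) set \<Rightarrow> ('n \<Rightarrow> ('n \<Rightarrow> rat) rel) set" where
  "Rn D = {R. (\<forall>i. R i \<subseteq> D \<times> D \<and> strict_linear_order_on D (R i)) \<and>
              (\<Inter>i. R i) = prod_order_rel D}"

definition Rn_topology :: "('n \<Rightarrow> rat) set \<Rightarrow> ('n \<Rightarrow> ('n \<Rightarrow> rat) rel) topology" where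
  "Rn_topology D = subtopology (product_topology (\<lambda>_. rel_topology D) UNIV) (Rn D)"

definition logic_action :: "(('n \<Rightarrow> rat) \<Rightarrow> ('n \<Rightarrow> rat)) \<Rightarrow> ('n \<Rightarrow> ('n \<Rightarrow> rat) rel) \<Rightarrow> ('n \<Rightarrow> ('n \<Rightarrow> rat) rel)" where
  "logic_action g R = (\<lambda>i. {(a, b). (inv g a, inv g b) \<in> R i})"

end

theory Submission
  imports Defs
begin


lemma back_forth:
  fixes A :: "'a set" and B :: "'b set" and Q :: "'a \<Rightarrow> 'a \<Rightarrow> 'b \<Rightarrow> 'b \<Rightarrow> bool"
    and good :: "('a \<times> 'b) set \<Rightarrow> bool"
  assumes good_def: "\<And>P. good P \<longleftrightarrow> P \<subseteq> A \<times> B \<and> (\<forall>x y x' y'. (x,y)\<in>P \<longrightarrow> (x',y')\<in>P \<longrightarrow> Q x x' y y')"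
  assumes cA: "countable A" and cB: "countable B" and nA: "A \<noteq> {}" and nB: "B \<noteq> {}"
  and fwd: "\<And>P x. finite P \<Longrightarrow> good P \<Longrightarrow> x \<in> A \<Longrightarrow> \<exists>y. good (insert (x,y) P)"
  and bwd: "\<And>P y. finite P \<Longrightarrow> good P \<Longrightarrow> y \<in> B \<Longrightarrow> \<exists>x. good (insert (x,y) P)"
  and injQ: "\<And>x x' y y'. x\<in>A \<Longrightarrow> x'\<in>A \<Longrightarrow> y\<in>B \<Longrightarrow> y'\<in>B \<Longrightarrow> Q x x' y y' \<Longrightarrow> Q x' x y' y \<Longrightarrow> (x = x' \<longleftrightarrow> y = y')"
  shows "\<exists>h. bij_betw h A B \<and> (\<forall>x\<in>A. \<forall>x'\<in>A. Q x x' (h x) (h x'))"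
proof -
  define a where "a = from_nat_into A"
  define b where "b = from_nat_into B"
  have aA: "range a = A" unfolding a_def using cA nA by (simp add: range_from_nat_into)
  have bB: "range b = B" unfolding b_def using cB nB by (simp add: range_from_nat_into)
  define step where "step = (\<lambda>k P. let P1 = insert (a k, SOME y. good (insert (a k, y) P)) P
      in insert (SOME x. good (insert (x, b k) P1), b k) P1)"
  define sq where "sq = rec_nat {} step"
  have sq0: "sq 0 = {}" and sqS: "\<And>k. sq (Suc k) = step k (sq k)" unfolding sq_def by simp_all
  have inv: "finite (sq k) \<and> good (sq k)" for k
  proof (induction k)
    case 0 then show ?case by (simp add: sq0 good_def)
  next
    case (Suc k)
    define P1 where "P1 = insert (a k, SOME y. good (insert (a k, y) (sq k))) (sq k)"
    have "\<exists>y. good (insert (a k, y) (sq k))" using fwd Suc aA by blast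
    then have g1: "good P1" unfolding P1_def by (rule someI_ex)
    have f1: "finite P1" using Suc P1_def by simp
    have "\<exists>x. good (insert (x, b k) P1)" using bwd g1 f1 bB by blast
    then have "good (insert (SOME x. good (insert (x, b k) P1), b k) P1)" by (rule someI_ex)
    then show ?case using f1 by (simp add: sqS step_def P1_def[symmetric] Let_def)
  qed
  have sqmono: "sq k \<subseteq> sq (Suc k)" for k by (auto simp: sqS step_def Let_def)
  have sqle: "k \<le> l \<Longrightarrow> sq k \<subseteq> sq l" for k l
    using lift_Suc_mono_le[of sq, OF sqmono] by blast
  define H where "H = (\<Union>k. sq k)"
  have Hsub: "H \<subseteq> A \<times> B" using inv unfolding H_def good_def by blast
  have HQ: "Q x x' y y'" if xy: "(x,y) \<in> H" "(x',y') \<in> H" for x y x' y'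
  proof -
    obtain k l where "(x,y) \<in> sq k" "(x',y') \<in> sq l" using xy unfolding H_def by blast
    then have "(x,y) \<in> sq (max k l)" "(x',y') \<in> sq (max k l)" using sqle by (meson max.cobounded1 max.cobounded2 subsetD)+
    then show ?thesis using inv[of "max k l"] unfolding good_def by blast
  qed
  have Hdom: "\<exists>y. (a k, y) \<in> H" for k
    unfolding H_def by (rule exI[of _ "SOME y. good (insert (a k, y) (sq k))"]) (auto simp: sqS step_def Let_def intro!: exI[of _ "Suc k"])
  have Hran: "\<exists>x. (x, b k) \<in> H" for k
    unfolding H_def by (auto simp: sqS step_def Let_def intro!: exI[of _ "Suc k"])
  have Hfun: "y = y'" if "(x,y) \<in> H" "(x,y') \<in> H" for x y y'
    using injQ[of x x y y'] HQ[OF that] HQ[OF that(2,1)] that Hsub by blast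
  have Hinj: "x = x'" if "(x,y) \<in> H" "(x',y) \<in> H" for x x' y
    using injQ[of x x' y y] HQ[OF that] HQ[OF that(2,1)] that Hsub by blast
  define h where "h x = (THE y. (x,y) \<in> H)" for x
  have hH: "(x, h x) \<in> H" if xA: "x \<in> A" for x
  proof -
    obtain k where "x = a k" using xA aA by auto
    then obtain y where y: "(x,y) \<in> H" using Hdom by blast
    then have "h x = y" unfolding h_def using Hfun by blast
    then show ?thesis using y by simp
  qed
  have "bij_betw h A B"
    unfolding bij_betw_def
  proof
    show "inj_on h A" unfolding inj_on_def using hH Hinj by metis
    show "h ` A = B"
    proof
      show "h ` A \<subseteq> B" using hH Hsub by blast
      show "B \<subseteq> h ` A"
      proof
        fix y assume "y \<in> B"
        then obtain k where "y = b k" using bB by auto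
        then obtain x where x: "(x,y) \<in> H" using Hran by blast
        then have "x \<in> A" using Hsub by blast
        then have "h x = y" using hH Hfun x by blast
        then show "y \<in> h ` A" using \<open>x \<in> A\<close> by blast
      qed
    qed
  qed
  then show ?thesis using hH HQ by blast
qed




lemma finite_sep:
  fixes S T :: "rat set"
  assumes "finite S" "finite T" "\<forall>s\<in>S. \<forall>t\<in>T. s < t"
  shows "\<exists>l h. l < h \<and> (\<forall>s\<in>S. s \<le> l) \<and> (\<forall>t\<in>T. h \<le> t)"
proof (cases "S = {}")
  case True
  show ?thesis
  proof (cases "T = {}")
    case True with \<open>S = {}\<close> show ?thesis by (intro exI[of _ 0] exI[of _ 1]) auto
  next
    case TF: False
    have "\<forall>t\<in>T. Min T \<le> t" using assms(2) by auto
    then show ?thesis using \<open>S = {}\<close>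
      by (intro exI[of _ "Min T - 1"] exI[of _ "Min T"]) auto
  qed
next
  case False
  show ?thesis
  proof (cases "T = {}")
    case True with False assms show ?thesis
      by (intro exI[of _ "Max S"] exI[of _ "Max S + 1"]) auto
  next
    case F2: False
    have "Max S < Min T" using False F2 assms by auto
    then show ?thesis using False F2 assms
      by (intro exI[of _ "Max S"] exI[of _ "Min T"]) auto
  qed
qed

definition cQ :: "('n \<Rightarrow> 'n) \<Rightarrow> ('n \<Rightarrow> rat) \<Rightarrow> ('n \<Rightarrow> rat) \<Rightarrow> ('n \<Rightarrow> rat) \<Rightarrow> ('n \<Rightarrow> rat) \<Rightarrow> bool" where
  "cQ p x x' y y' \<longleftrightarrow> (\<forall>j. x j < x' j \<longleftrightarrow> y (p j) < y' (p j))"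

definition cgood :: "('n \<Rightarrow> rat) set \<Rightarrow> ('n \<Rightarrow> 'n) \<Rightarrow> (('n \<Rightarrow> rat) \<times> ('n \<Rightarrow> rat)) set \<Rightarrow> bool" where
  "cgood D p P \<longleftrightarrow> P \<subseteq> D \<times> D \<and> (\<forall>x y x' y'. (x,y)\<in>P \<longrightarrow> (x',y')\<in>P \<longrightarrow> cQ p x x' y y')"

lemma coord_forth:
  fixes D :: "('n::finite \<Rightarrow> rat) set"
  assumes dense: "dense_in_Qn D" and ncc: "no_common_coord D" and bp: "bij p"
    and fP: "finite P" and gP: "cgood D p P" and x0: "x0 \<in> D"
  shows "\<exists>y0. cgood D p (insert (x0, y0) P)"
proof (cases "\<exists>y1. (x0, y1) \<in> P")
  case True
  then obtain y1 where "(x0,y1) \<in> P" by blast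
  then have "insert (x0,y1) P = P" by blast
  then show ?thesis using gP by metis
next
  case False
  define S where "S m = (\<lambda>(x,y). y m) ` {q \<in> P. fst q (inv p m) < x0 (inv p m)}" for m
  define T where "T m = (\<lambda>(x,y). y m) ` {q \<in> P. x0 (inv p m) < fst q (inv p m)}" for m
  have ipp: "p (inv p m) = m" for m using bp by (simp add: bij_is_surj surj_f_inv_f)
  have pip: "inv p (p j) = j" for j using bp by (simp add: bij_is_inj)
  have "\<exists>l h. l < h \<and> (\<forall>s\<in>S m. s \<le> l) \<and> (\<forall>t\<in>T m. h \<le> t)" for m
  proof (rule finite_sep)
    show "finite (S m)" "finite (T m)" using fP unfolding S_def T_def by auto
    show "\<forall>s\<in>S m. \<forall>t\<in>T m. s < t"
    proof (intro ballI)
      fix s t assume "s \<in> S m" "t \<in> T m"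
      then obtain x y x' y' where q: "(x,y) \<in> P" "(x',y') \<in> P" "x (inv p m) < x0 (inv p m)"
        "x0 (inv p m) < x' (inv p m)" "s = y m" "t = y' m" unfolding S_def T_def by auto
      then have "cQ p x x' y y'" using gP unfolding cgood_def by blast
      then show "s < t" using q ipp[of m] unfolding cQ_def by (metis order.strict_trans)
    qed
  qed
  then obtain l h where lh: "\<And>m. l m < h m" "\<And>m s. s \<in> S m \<Longrightarrow> s \<le> l m" "\<And>m t. t \<in> T m \<Longrightarrow> h m \<le> t"
    by metis
  obtain y0 where y0: "y0 \<in> D" "\<And>m. l m < y0 m \<and> y0 m < h m"
    using dense lh(1) unfolding dense_in_Qn_def by blast
  have key: "x0 j < x j \<longleftrightarrow> y0 (p j) < y (p j)" "x j < x0 j \<longleftrightarrow> y (p j) < y0 (p j)"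
    if xy: "(x,y) \<in> P" for x y j
  proof -
    have "x \<noteq> x0" using False xy by blast
    moreover have "x \<in> D" using xy gP unfolding cgood_def by blast
    ultimately have ne: "x j \<noteq> x0 j" using ncc x0 unfolding no_common_coord_def by blast
    show "x0 j < x j \<longleftrightarrow> y0 (p j) < y (p j)" "x j < x0 j \<longleftrightarrow> y (p j) < y0 (p j)"
    proof -
      { assume "x0 j < x j"
        then have "y (p j) \<in> T (p j)" unfolding T_def using xy pip by force
        then have "y0 (p j) < y (p j)" using lh(3) y0(2) by (meson order.strict_trans2)
      } note A = this
      { assume "x j < x0 j"
        then have "y (p j) \<in> S (p j)" unfolding S_def using xy pip by force
        then have "y (p j) < y0 (p j)" using lh(2) y0(2) by (meson order.strict_trans1)
      } note B = this
      show "x0 j < x j \<longleftrightarrow> y0 (p j) < y (p j)" "x j < x0 j \<longleftrightarrow> y (p j) < y0 (p j)"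
        using A B ne by (meson linorder_neqE order.asym)+
    qed
  qed
  have "cgood D p (insert (x0, y0) P)"
    using gP x0 y0(1) key unfolding cgood_def cQ_def by auto
  then show ?thesis by blast
qed

lemma cQ_conv:
  assumes "bij p"
  shows "cQ p x x' y y' \<longleftrightarrow> cQ (inv p) y y' x x'"
proof -
  have ipp: "p (inv p m) = m" for m using assms by (simp add: bij_is_surj surj_f_inv_f)
  have pip: "inv p (p j) = j" for j using assms by (simp add: bij_is_inj)
  show ?thesis unfolding cQ_def by (metis ipp pip)
qed

lemma cgood_conv:
  assumes "bij p"
  shows "cgood D p P \<longleftrightarrow> cgood D (inv p) (converse P)"
  unfolding cgood_def using cQ_conv[OF assms] by auto

lemma coord_iso:
  fixes D :: "('n::finite \<Rightarrow> rat) set"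
  assumes dense: "dense_in_Qn D" and ncc: "no_common_coord D" and bp: "bij p"
  shows "\<exists>h. bij_betw h D D \<and> (\<forall>x\<in>D. \<forall>x'\<in>D. \<forall>j. x j < x' j \<longleftrightarrow> h x (p j) < h x' (p j))"
proof -
  have bip: "bij (inv p)" using bp by (simp add: bij_imp_bij_inv)
  have ne: "D \<noteq> {}"
  proof -
    have "\<exists>d\<in>D. \<forall>i. (\<lambda>_. 0::rat) i < d i \<and> d i < (\<lambda>_. 1) i"
      by (rule dense[unfolded dense_in_Qn_def, rule_format]) simp
    then show ?thesis by blast
  qed
  have "\<exists>h. bij_betw h D D \<and> (\<forall>x\<in>D. \<forall>x'\<in>D. cQ p x x' (h x) (h x'))"
  proof (rule back_forth[where good = "cgood D p"])
    show "cgood D p P \<longleftrightarrow> P \<subseteq> D \<times> D \<and> (\<forall>x y x' y'. (x,y)\<in>P \<longrightarrow> (x',y')\<in>P \<longrightarrow> cQ p x x' y y')" for P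
      by (simp add: cgood_def)
    show "countable D" "countable D" by (rule countable_subset[OF subset_UNIV], simp)+
    show "D \<noteq> {}" "D \<noteq> {}" using ne by auto
    show "\<exists>y. cgood D p (insert (x, y) P)" if "finite P" "cgood D p P" "x \<in> D" for P x
      using coord_forth[OF dense ncc bp that] .
    show "\<exists>x. cgood D p (insert (x, y) P)" if tt: "finite P" "cgood D p P" "y \<in> D" for P y
    proof -
      have "cgood D (inv p) (converse P)" using tt cgood_conv[OF bp] by blast
      then obtain x where "cgood D (inv p) (insert (y,x) (converse P))"
        using coord_forth[OF dense ncc bip _ _ tt(3)] tt(1) by blast
      then have "cgood D p (converse (insert (y,x) (converse P)))"
        using cgood_conv[OF bip] bp by (simp add: inv_inv_eq)
      moreover have "converse (insert (y,x) (converse P)) = insert (x,y) P" by auto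
      ultimately show ?thesis by metis
    qed
    show "x = x' \<longleftrightarrow> y = y'" if "cQ p x x' y y'" "cQ p x' x y' y" for x x' y y'
    proof -
      have ipp: "p (inv p m) = m" for m using bp by (simp add: bij_is_surj surj_f_inv_f)
      show ?thesis
      proof
        assume "x = x'"
        then have "\<forall>j. y (p j) = y' (p j)" using that unfolding cQ_def by (meson linorder_neqE order.irrefl)
        then show "y = y'" using ipp by (metis ext)
      next
        assume "y = y'"
        then show "x = x'" using that unfolding cQ_def by (meson linorder_neqE order.irrefl ext)
      qed
    qed
  qed
  then show ?thesis unfolding cQ_def by blast
qed




definition Crd :: "('n \<Rightarrow> rat) set \<Rightarrow> 'n \<Rightarrow> ('n \<Rightarrow> rat) rel" where
  "Crd D j = {(a,b). a \<in> D \<and> b \<in> D \<and> a j < b j}"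

lemma prod_less_iff:
  assumes "no_common_coord D" "a \<in> D" "b \<in> D"
  shows "prod_less a b \<longleftrightarrow> (\<forall>k. a k < b k)"
proof
  assume "prod_less a b"
  then have "a \<noteq> b" "\<forall>k. a k \<le> b k" unfolding prod_less_def by auto
  then have "\<forall>k. a k \<noteq> b k" using assms unfolding no_common_coord_def by blast
  then show "\<forall>k. a k < b k" using \<open>\<forall>k. a k \<le> b k\<close> by (simp add: order.not_eq_order_implies_strict)
next
  assume "\<forall>k. a k < b k"
  then show "prod_less a b" unfolding prod_less_def by (metis order.strict_implies_order order.irrefl)
qed

context
  fixes D :: "('n::finite \<Rightarrow> rat) set" and R :: "'n \<Rightarrow> ('n \<Rightarrow> rat) rel"
  assumes dense: "dense_in_Qn D" and ncc: "no_common_coord D" and RR: "R \<in> Rn D"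
begin

lemma box: "(\<And>k. lo k < hi k) \<Longrightarrow> \<exists>d\<in>D. \<forall>k. lo k < d k \<and> d k < hi k"
  using dense unfolding dense_in_Qn_def by blast

lemma Rsub: "(a,b) \<in> R i \<Longrightarrow> a \<in> D \<and> b \<in> D"
  using RR unfolding Rn_def by blast

lemma Rtrans: "(a,b) \<in> R i \<Longrightarrow> (b,c) \<in> R i \<Longrightarrow> (a,c) \<in> R i"
  using RR unfolding Rn_def strict_linear_order_on_def trans_def by blast

lemma Rirr: "(a,a) \<notin> R i"
  using RR unfolding Rn_def strict_linear_order_on_def irrefl_def by blast

lemma Rtot: "a \<in> D \<Longrightarrow> b \<in> D \<Longrightarrow> a \<noteq> b \<Longrightarrow> (a,b) \<notin> R i \<Longrightarrow> (b,a) \<in> R i"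
  using RR unfolding Rn_def strict_linear_order_on_def total_on_def by blast

lemma allR: "a \<in> D \<Longrightarrow> b \<in> D \<Longrightarrow> (\<forall>i. (a,b) \<in> R i) \<longleftrightarrow> (\<forall>k. a k < b k)"
proof -
  assume ab: "a \<in> D" "b \<in> D"
  have "(\<Inter>i. R i) = prod_order_rel D" using RR unfolding Rn_def by blast
  then have "(\<forall>i. (a,b) \<in> R i) \<longleftrightarrow> prod_less a b" using ab unfolding prod_order_rel_def by blast
  then show ?thesis using prod_less_iff[OF ncc ab] by simp
qed

lemma plR: "a \<in> D \<Longrightarrow> b \<in> D \<Longrightarrow> \<forall>k. a k < b k \<Longrightarrow> (a,b) \<in> R i"
  using allR by blast

definition jp :: "'n \<Rightarrow> ('n \<Rightarrow> rat) \<Rightarrow> ('n \<Rightarrow> rat) \<Rightarrow> bool" where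
  "jp j a b \<longleftrightarrow> a \<in> D \<and> b \<in> D \<and> b j < a j \<and> (\<forall>k. k \<noteq> j \<longrightarrow> a k < b k)"

definition U :: "('n \<Rightarrow> rat) \<Rightarrow> ('n \<Rightarrow> rat) \<Rightarrow> 'n set" where
  "U a b = {i. (b,a) \<in> R i}"

lemma U_ne: "a \<in> D \<Longrightarrow> b \<in> D \<Longrightarrow> b m < a m \<Longrightarrow> U a b \<noteq> {}"
proof -
  assume ab: "a \<in> D" "b \<in> D" "b m < a m"
  then obtain i where "(a,b) \<notin> R i" using allR by (meson order.asym)
  moreover have "a \<noteq> b" using ab by auto
  ultimately have "(b,a) \<in> R i" using Rtot ab by blast
  then show ?thesis unfolding U_def by blast
qed

lemma LX:
  assumes "(b,a) \<in> R i" "(b',a') \<in> R i" "\<forall>k. a k < b' k" "\<forall>k. a' k < b k"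
  shows False
proof -
  have D: "a \<in> D" "b \<in> D" "a' \<in> D" "b' \<in> D" using assms Rsub by blast+
  have "(a,b') \<in> R i" "(a',b) \<in> R i" using plR D assms by blast+
  then have "(b,b) \<in> R i" using assms Rtrans by meson
  then show False using Rirr by blast
qed

lemma ex_below: "\<exists>L::rat. \<forall>m::'n. L < a m \<and> L < b m"
proof -
  have "Min (range a \<union> range b) - 1 < a m \<and> Min (range a \<union> range b) - 1 < b m" for m
  proof -
    have "Min (range a \<union> range b) \<le> a m" "Min (range a \<union> range b) \<le> b m" by (auto intro!: Min_le)
    then show ?thesis by linarith
  qed
  then show ?thesis by blast
qed

lemma ex_above: "\<exists>H::rat. \<forall>m::'n. a m < H \<and> b m < H"
proof -
  have "a m < Max (range a \<union> range b) + 1 \<and> b m < Max (range a \<union> range b) + 1" for m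
  proof -
    have "a m \<le> Max (range a \<union> range b)" "b m \<le> Max (range a \<union> range b)" by (auto intro!: Max_ge)
    then show ?thesis by linarith
  qed
  then show ?thesis by blast
qed

lemma L_std:
  assumes "jp j a b"
  shows "\<exists>x y. x j = a \<and> y j = b \<and> (\<forall>k. x k \<in> D \<and> y k \<in> D) \<and>
     (\<forall>k l. k \<noteq> l \<longrightarrow> (\<forall>m. x k m < y l m)) \<and> (\<forall>k. y k k < x k k)"
proof -
  have jpa: "a \<in> D" "b \<in> D" "b j < a j" "\<And>k. k \<noteq> j \<Longrightarrow> a k < b k" using assms unfolding jp_def by auto
  obtain L where L: "\<forall>m. L < a m \<and> L < b m" using ex_below by blast
  obtain H where H: "\<forall>m. a m < H \<and> b m < H" using ex_above by blast
  define mid where "mid k = (a k + b k) / 2" for k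
  have mid: "a k < mid k" "mid k < b k" if kj: "k \<noteq> j" for k
  proof -
    have "a k < b k" using jpa(4)[OF kj] .
    then show "a k < mid k" "mid k < b k" unfolding mid_def by (simp_all add: field_simps)
  qed
  have "\<exists>d. d \<in> D \<and> (\<forall>m. (if m = k then mid k else L - 1) < d m \<and> d m < (if m = k then b k else L))" if kj: "k \<noteq> j" for k
  proof -
    have "\<And>m. (if m = k then mid k else L - 1) < (if m = k then b k else L)" using mid[OF kj] by simp
    from box[of "\<lambda>m. if m = k then mid k else L - 1" "\<lambda>m. if m = k then b k else L", OF this]
    show ?thesis by blast
  qed
  then have "\<forall>k. \<exists>d. k \<noteq> j \<longrightarrow> d \<in> D \<and> (\<forall>m. (if m = k then mid k else L - 1) < d m \<and> d m < (if m = k then b k else L))" by blast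
  from choice[OF this] obtain x0 where x0': "\<forall>k. k \<noteq> j \<longrightarrow> x0 k \<in> D \<and> (\<forall>m. (if m = k then mid k else L - 1) < x0 k m \<and> x0 k m < (if m = k then b k else L))"
    by blast
  have x0: "\<And>k. k \<noteq> j \<Longrightarrow> x0 k \<in> D \<and> (\<forall>m. (if m = k then mid k else L - 1) < x0 k m \<and> x0 k m < (if m = k then b k else L))"
    using x0' by blast
  have "\<exists>d. d \<in> D \<and> (\<forall>m. (if m = k then a k else H) < d m \<and> d m < (if m = k then mid k else H + 1))" if kj: "k \<noteq> j" for k
  proof -
    have "\<And>m. (if m = k then a k else H) < (if m = k then mid k else H + 1)" using mid[OF kj] by simp
    from box[of "\<lambda>m. if m = k then a k else H" "\<lambda>m. if m = k then mid k else H + 1", OF this]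
    show ?thesis by blast
  qed
  then have "\<forall>k. \<exists>d. k \<noteq> j \<longrightarrow> d \<in> D \<and> (\<forall>m. (if m = k then a k else H) < d m \<and> d m < (if m = k then mid k else H + 1))" by blast
  from choice[OF this] obtain y0 where y0': "\<forall>k. k \<noteq> j \<longrightarrow> y0 k \<in> D \<and> (\<forall>m. (if m = k then a k else H) < y0 k m \<and> y0 k m < (if m = k then mid k else H + 1))"
    by blast
  have y0: "\<And>k. k \<noteq> j \<Longrightarrow> y0 k \<in> D \<and> (\<forall>m. (if m = k then a k else H) < y0 k m \<and> y0 k m < (if m = k then mid k else H + 1))"
    using y0' by blast
  define x where "x k = (if k = j then a else x0 k)" for k
  define y where "y k = (if k = j then b else y0 k)" for k
  have 1: "\<forall>k. x k \<in> D \<and> y k \<in> D" unfolding x_def y_def using x0 y0 jpa by auto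
  have 2: "\<forall>m. x k m < y l m" if kl: "k \<noteq> l" for k l
  proof
    fix m
    have LH: "L < H" using L H by (meson order.strict_trans)
    show "x k m < y l m"
    proof (cases "k = j")
      case True
      then have lj: "l \<noteq> j" using kl by auto
      have yl: "\<forall>m. (if m = l then a l else H) < y0 l m" using y0[OF lj] by blast
      have "a m < y0 l m"
      proof (cases "m = l")
        case True then show ?thesis using yl[rule_format, of m] by simp
      next
        case False then have "H < y0 l m" using yl by metis
        then show ?thesis using H by (meson order.strict_trans)
      qed
      then show ?thesis using True lj unfolding x_def y_def by simp
    next
      case False
      have xk: "\<forall>m. x0 k m < (if m = k then b k else L)" using x0[OF False] by blast
      show ?thesis
      proof (cases "l = j")
        case True
        have "x0 k m < b m"
        proof (cases "m = k")
          case True then show ?thesis using xk[rule_format, of m] by simp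
        next
          case F: False then have "x0 k m < L" using xk by metis
          then show ?thesis using L by (meson order.strict_trans)
        qed
        then show ?thesis using True False unfolding x_def y_def by simp
      next
        case F2: False
        have yl: "\<forall>m. (if m = l then a l else H) < y0 l m" using y0[OF F2] by blast
        have "x0 k m < y0 l m"
        proof (cases "m = k")
          case True
          then have "x0 k m < b m" "H < y0 l m" using xk[rule_format, of m] yl[rule_format, of m] kl by auto
          then show ?thesis using H by (meson order.strict_trans)
        next
          case F3: False
          then have x1: "x0 k m < L" using xk by metis
          show ?thesis
          proof (cases "m = l")
            case True then have "a m < y0 l m" using yl[rule_format, of m] by simp
            then show ?thesis using x1 L by (meson order.strict_trans)
          next
            case False then have "H < y0 l m" using yl by metis
            then show ?thesis using x1 LH by (meson order.strict_trans)
          qed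
        qed
        then show ?thesis using F2 False unfolding x_def y_def by simp
      qed
    qed
  qed
  have 3: "\<forall>k. y k k < x k k"
  proof
    fix k show "y k k < x k k"
    proof (cases "k = j")
      case True then show ?thesis using jpa(3) unfolding x_def y_def by simp
    next
      case False
      have "y0 k k < mid k" "mid k < x0 k k" using x0[OF False, THEN conjunct2, rule_format, of k] y0[OF False, THEN conjunct2, rule_format, of k] by auto
      then show ?thesis using False unfolding x_def y_def by simp
    qed
  qed
  have "x j = a" "y j = b" by (simp_all add: x_def y_def)
  then show ?thesis using 1 2 3 by blast
qed

lemma L_single:
  assumes "jp j a b"
  shows "\<exists>i. U a b = {i}"
proof -
  obtain x y where xy: "x j = a" "y j = b" "\<forall>k. x k \<in> D \<and> y k \<in> D"
     "\<forall>k l. k \<noteq> l \<longrightarrow> (\<forall>m. x k m < y l m)" "\<forall>k. y k k < x k k"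
    using L_std[OF assms] by blast
  have ne: "U (x k) (y k) \<noteq> {}" for k using U_ne[of "x k" "y k" k] xy(3,5) by blast
  define f where "f k = (SOME i. i \<in> U (x k) (y k))" for k
  have f: "f k \<in> U (x k) (y k)" for k unfolding f_def using ne[of k] by (simp add: some_in_eq)
  have disj: "k = l" if "i \<in> U (x k) (y k)" "i \<in> U (x l) (y l)" for i k l
  proof (rule ccontr)
    assume "k \<noteq> l"
    have "(y k, x k) \<in> R i" "(y l, x l) \<in> R i" using that unfolding U_def by auto
    moreover have "\<forall>m. x k m < y l m" "\<forall>m. x l m < y k m" using xy(4) \<open>k \<noteq> l\<close> by auto
    ultimately show False by (rule LX)
  qed
  have "inj f"
  proof (rule injI)
    fix k l assume "f k = f l"
    then show "k = l" using disj[of "f k" k l] f[of k] f[of l] by simp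
  qed
  then have "surj f" by (rule finite_UNIV_inj_surj[OF finite])
  have "U a b = {f j}"
  proof
    show "{f j} \<subseteq> U a b" using f[of j] xy(1,2) by simp
    show "U a b \<subseteq> {f j}"
    proof
      fix i assume i: "i \<in> U a b"
      obtain k where "i = f k" using surjD[OF \<open>surj f\<close>, of i] by blast
      then have "k = j" using disj[of i k j] f[of k] i xy(1,2) by simp
      then show "i \<in> {f j}" using \<open>i = f k\<close> by simp
    qed
  qed
  then show ?thesis by blast
qed

lemma mono_b: "jp j a b \<Longrightarrow> jp j a b' \<Longrightarrow> \<forall>k. b k < b' k \<Longrightarrow> U a b = U a b'"
proof -
  assume h: "jp j a b" "jp j a b'" "\<forall>k. b k < b' k"
  have "U a b' \<subseteq> U a b"
  proof
    fix i assume "i \<in> U a b'"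
    then have "(b',a) \<in> R i" unfolding U_def by simp
    moreover have "(b,b') \<in> R i" using h plR unfolding jp_def by blast
    ultimately show "i \<in> U a b" unfolding U_def using Rtrans by blast
  qed
  moreover obtain i1 where "U a b = {i1}" using L_single[OF h(1)] by blast
  moreover obtain i2 where "U a b' = {i2}" using L_single[OF h(2)] by blast
  ultimately show ?thesis by auto
qed

lemma mono_a: "jp j a b \<Longrightarrow> jp j a' b \<Longrightarrow> \<forall>k. a' k < a k \<Longrightarrow> U a b = U a' b"
proof -
  assume h: "jp j a b" "jp j a' b" "\<forall>k. a' k < a k"
  have "U a' b \<subseteq> U a b"
  proof
    fix i assume "i \<in> U a' b"
    then have "(b,a') \<in> R i" unfolding U_def by simp
    moreover have "(a',a) \<in> R i" using h plR unfolding jp_def by blast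
    ultimately show "i \<in> U a b" unfolding U_def using Rtrans by blast
  qed
  moreover obtain i1 where "U a b = {i1}" using L_single[OF h(1)] by blast
  moreover obtain i2 where "U a' b = {i2}" using L_single[OF h(2)] by blast
  ultimately show ?thesis by auto
qed

lemma L_const1:
  assumes "jp j a b" "jp j a e"
  shows "U a b = U a e"
proof -
  have A: "a \<in> D" "b \<in> D" "b j < a j" "\<And>k. k \<noteq> j \<Longrightarrow> a k < b k" using assms(1) unfolding jp_def by auto
  have E: "e \<in> D" "e j < a j" "\<And>k. k \<noteq> j \<Longrightarrow> a k < e k" using assms(2) unfolding jp_def by auto
  define lo where "lo k = (if k = j then min (b j) (e j) - 1 else a k)" for k
  define hi where "hi k = (if k = j then min (b j) (e j) else min (b k) (e k))" for k
  have "lo k < hi k" for k unfolding lo_def hi_def using A(4)[of k] E(3)[of k] by auto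
  then obtain f where f: "f \<in> D" "\<And>k. lo k < f k \<and> f k < hi k" using box by blast
  have fb: "f k < b k \<and> f k < e k" for k using f(2)[of k] unfolding hi_def by (cases "k = j") auto
  have "f k > a k" if "k \<noteq> j" for k using f(2)[of k] that unfolding lo_def by auto
  then have jf: "jp j a f" unfolding jp_def using A(1,3) f(1) fb[of j] by auto
  show ?thesis using mono_b[OF jf assms(1)] mono_b[OF jf assms(2)] fb by simp
qed

lemma L_const2:
  assumes "jp j a e" "jp j a' e"
  shows "U a e = U a' e"
proof -
  have A: "a \<in> D" "e \<in> D" "e j < a j" "\<And>k. k \<noteq> j \<Longrightarrow> a k < e k" using assms(1) unfolding jp_def by auto
  have A': "a' \<in> D" "e j < a' j" "\<And>k. k \<noteq> j \<Longrightarrow> a' k < e k" using assms(2) unfolding jp_def by auto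
  define lo where "lo k = (if k = j then e j else min (a k) (a' k) - 1)" for k
  define hi where "hi k = (if k = j then min (a j) (a' j) else min (a k) (a' k))" for k
  have "lo k < hi k" for k unfolding lo_def hi_def using A(3) A'(2) by auto
  then obtain g where g: "g \<in> D" "\<And>k. lo k < g k \<and> g k < hi k" using box by blast
  have ga: "g k < a k \<and> g k < a' k" for k using g(2)[of k] unfolding hi_def by (cases "k = j") auto
  have "g k < e k" if "k \<noteq> j" for k using ga[of k] A(4)[OF that] by auto
  moreover have "e j < g j" using g(2)[of j] unfolding lo_def by simp
  ultimately have jg: "jp j g e" unfolding jp_def using g(1) A(2) by auto
  show ?thesis using mono_a[OF assms(1) jg] mono_a[OF assms(2) jg] ga by simp
qed

lemma L_const:
  assumes "jp j a b" "jp j a' b'"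
  shows "U a b = U a' b'"
proof -
  have A: "a \<in> D" "a' \<in> D" using assms unfolding jp_def by auto
  define lo where "lo k = (if k = j then min (a j) (a' j) - 1 else max (a k) (a' k))" for k
  define hi where "hi k = (if k = j then min (a j) (a' j) else max (a k) (a' k) + 1)" for k
  have "lo k < hi k" for k unfolding lo_def hi_def by auto
  then obtain e where e: "e \<in> D" "\<And>k. lo k < e k \<and> e k < hi k" using box by blast
  have "e j < a j" "e j < a' j" using e(2)[of j] unfolding hi_def by auto
  moreover have "a k < e k \<and> a' k < e k" if "k \<noteq> j" for k using e(2)[of k] that unfolding lo_def by auto
  ultimately have je: "jp j a e" "jp j a' e" unfolding jp_def using A e(1) by auto
  show ?thesis using L_const1[OF assms(1) je(1)] L_const1[OF assms(2) je(2)] L_const2[OF je] by simp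
qed

lemma ex_jp: "\<exists>a b. jp j a b"
proof -
  have "\<And>k. (\<lambda>_. 0::rat) k < (\<lambda>_. 1) k" by simp
  from box[OF this] obtain a where a: "a \<in> D" by blast
  define lo where "lo k = (if k = j then a j - 1 else a k)" for k
  define hi where "hi k = (if k = j then a j else a k + 1)" for k
  have "lo k < hi k" for k unfolding lo_def hi_def by auto
  then obtain b where b: "b \<in> D" "\<And>k. lo k < b k \<and> b k < hi k" using box by blast
  have "b j < a j" using b(2)[of j] unfolding hi_def by simp
  moreover have "a k < b k" if "k \<noteq> j" for k using b(2)[of k] that unfolding lo_def by simp
  ultimately have "jp j a b" unfolding jp_def using a b(1) by auto
  then show ?thesis by blast
qed

lemma ex_sig: "\<exists>i. \<forall>a b. jp j a b \<longrightarrow> (b,a) \<in> R i"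
proof -
  obtain a0 b0 where j0: "jp j a0 b0" using ex_jp by blast
  obtain i where i: "U a0 b0 = {i}" using L_single[OF j0] by blast
  have "(b,a) \<in> R i" if "jp j a b" for a b
  proof -
    have "U a b = {i}" using L_const[OF that j0] i by simp
    then show ?thesis unfolding U_def by blast
  qed
  then show ?thesis by blast
qed

lemma L_coord:
  assumes as: "\<forall>a b. jp j a b \<longrightarrow> (b,a) \<in> R i"
  shows "R i = Crd D j"
proof -
  have sup: "(a,b) \<in> R i" if ab: "a \<in> D" "b \<in> D" "a j < b j" for a b
  proof -
    define lo where "lo k = (if k = j then a j else max (a k) (b k))" for k
    define hi where "hi k = (if k = j then b j else max (a k) (b k) + 1)" for k
    have "lo k < hi k" for k unfolding lo_def hi_def using ab(3) by auto
    then obtain z where z: "z \<in> D" "\<And>k. lo k < z k \<and> z k < hi k" using box by blast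
    have az: "a k < z k" for k using z(2)[of k] unfolding lo_def by (cases "k = j") auto
    have azR: "(a,z) \<in> R i" using plR[OF ab(1) z(1)] az by blast
    have "z j < b j" using z(2)[of j] unfolding hi_def by simp
    moreover have "b k < z k" if "k \<noteq> j" for k using z(2)[of k] that unfolding lo_def by simp
    ultimately have "jp j b z" unfolding jp_def using ab z(1) by auto
    then have "(z,b) \<in> R i" using as by blast
    then show ?thesis using Rtrans azR by blast
  qed
  show ?thesis
  proof
    show "Crd D j \<subseteq> R i" using sup unfolding Crd_def by blast
    show "R i \<subseteq> Crd D j"
    proof
      fix p assume p: "p \<in> R i"
      obtain a b where pab: "p = (a,b)" by fastforce
      have ab: "a \<in> D" "b \<in> D" using p pab Rsub by auto
      have "a \<noteq> b" using p pab Rirr by auto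
      then have "a j \<noteq> b j" using ab ncc unfolding no_common_coord_def by blast
      moreover have "\<not> b j < a j"
      proof
        assume "b j < a j"
        then have "(b,a) \<in> R i" using sup ab by blast
        then have "(a,a) \<in> R i" using p pab Rtrans by blast
        then show False using Rirr by blast
      qed
      ultimately show "p \<in> Crd D j" using pab ab unfolding Crd_def by auto
    qed
  qed
qed

lemma rigid: "\<exists>t. bij t \<and> R = (\<lambda>i. Crd D (t i))"
proof -
  obtain s where s: "\<And>j. \<forall>a b. jp j a b \<longrightarrow> (b,a) \<in> R (s j)" using choice[OF allI[of "\<lambda>j. \<exists>i. \<forall>a b. jp j a b \<longrightarrow> (b,a) \<in> R i", OF ex_sig]] by blast
  have Rs: "R (s j) = Crd D j" for j using L_coord s by blast
  have "inj s"
  proof (rule injI)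
    fix j k assume sjk: "s j = s k"
    show "j = k"
    proof (rule ccontr)
      assume jk: "j \<noteq> k"
      obtain a b where "jp k a b" using ex_jp by blast
      then have "(a,b) \<in> Crd D j" "(a,b) \<notin> Crd D k" using jk unfolding jp_def Crd_def by auto
      then show False using Rs[of j] Rs[of k] sjk by simp
    qed
  qed
  then have bs: "bij s" using finite_UNIV_inj_surj[OF finite] bij_def by blast
  have "R = (\<lambda>i. Crd D (inv s i))"
  proof
    fix i
    have "s (inv s i) = i" using bs by (simp add: bij_is_surj surj_f_inv_f)
    then show "R i = Crd D (inv s i)" using Rs[of "inv s i"] by simp
  qed
  then show ?thesis using bs bij_imp_bij_inv by blast
qed

end




lemma Aut_bij: "g \<in> Aut D \<Longrightarrow> bij g"
proof -
  assume g: "g \<in> Aut D"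
  then have bD: "bij_betw g D D" and out: "\<And>x. x \<notin> D \<Longrightarrow> g x = x" unfolding Aut_def by auto
  have inD: "g x \<in> D \<longleftrightarrow> x \<in> D" for x
  proof (cases "x \<in> D")
    case True then show ?thesis using bij_betwE[OF bD] by blast
  next
    case False then show ?thesis using out[OF False] by simp
  qed
  show "bij g" unfolding bij_def
  proof
    show "inj g"
    proof (rule injI)
      fix x y assume "g x = g y"
      assume gxy: "g x = g y"
      show "x = y"
      proof (cases "x \<in> D")
        case True
        then have "y \<in> D" using inD gxy by metis
        then show ?thesis using True gxy bD unfolding bij_betw_def inj_on_def by blast
      next
        case False
        then have "y \<notin> D" using inD gxy by metis
        then show ?thesis using False gxy out by simp
      qed
    qed
    show "surj g"
    proof -
      have "y \<in> range g" for y
      proof (cases "y \<in> D")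
        case True then show ?thesis using bD unfolding bij_betw_def by auto
      next
        case False then have "g y = y" using out by blast
        then show ?thesis by (metis rangeI)
      qed
      then show ?thesis by blast
    qed
  qed
qed

lemma Aut_inD: "g \<in> Aut D \<Longrightarrow> g x \<in> D \<longleftrightarrow> x \<in> D"
proof -
  assume g: "g \<in> Aut D"
  then have bD: "bij_betw g D D" and out: "\<And>x. x \<notin> D \<Longrightarrow> g x = x" unfolding Aut_def by auto
  show ?thesis
  proof (cases "x \<in> D")
    case True then show ?thesis using bij_betwE[OF bD] by blast
  next
    case False then show ?thesis using out[OF False] by simp
  qed
qed

lemma Aut_inv: 
  assumes "g \<in> Aut D"
  shows "g (inv g a) = a" "inv g (g a) = a" "inv g a \<in> D \<longleftrightarrow> a \<in> D"
proof -
  have b: "bij g" using Aut_bij assms by blast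
  show 1: "g (inv g a) = a" using b by (simp add: bij_is_surj surj_f_inv_f)
  show "inv g (g a) = a" using b by (simp add: bij_is_inj)
  show "inv g a \<in> D \<longleftrightarrow> a \<in> D" using Aut_inD[OF assms, of "inv g a"] 1 by simp
qed

lemma Aut_pl:
  assumes "g \<in> Aut D" "a \<in> D" "b \<in> D"
  shows "prod_less (inv g a) (inv g b) \<longleftrightarrow> prod_less a b"
proof -
  have "inv g a \<in> D" "inv g b \<in> D" using Aut_inv assms by blast+
  then have "prod_less (inv g a) (inv g b) \<longleftrightarrow> prod_less (g (inv g a)) (g (inv g b))"
    using assms(1) unfolding Aut_def by blast
  then show ?thesis using Aut_inv(1)[OF assms(1)] by simp
qed

lemma action_Rn:
  assumes g: "g \<in> Aut D" and R: "R \<in> Rn D"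
  shows "logic_action g R \<in> Rn D"
proof -
  define h where "h = inv g"
  have hD: "h x \<in> D \<longleftrightarrow> x \<in> D" for x using Aut_inv(3)[OF g] h_def by simp
  have hinj: "h x = h y \<Longrightarrow> x = y" for x y
  proof -
    assume "h x = h y"
    then have "g (h x) = g (h y)" by simp
    then show "x = y" using Aut_inv(1)[OF g] h_def by simp
  qed
  have hpl: "a \<in> D \<Longrightarrow> b \<in> D \<Longrightarrow> prod_less (h a) (h b) \<longleftrightarrow> prod_less a b" for a b
    using Aut_pl[OF g] h_def by simp
  have LA: "logic_action g R i = {(a,b). (h a, h b) \<in> R i}" for i unfolding logic_action_def h_def by simp
  have Ri: "R i \<subseteq> D \<times> D" "trans (R i)" "irrefl (R i)" "total_on D (R i)" for i
    using R unfolding Rn_def strict_linear_order_on_def by auto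
  have RI: "(\<Inter>i. R i) = prod_order_rel D" using R unfolding Rn_def by blast
  have "logic_action g R i \<subseteq> D \<times> D \<and> strict_linear_order_on D (logic_action g R i)" for i
  proof -
    have "logic_action g R i \<subseteq> D \<times> D" unfolding LA using Ri(1)[of i] hD by auto
    moreover have "trans (logic_action g R i)" unfolding LA using Ri(2)[of i] unfolding trans_def by auto
    moreover have "irrefl (logic_action g R i)" unfolding LA using Ri(3)[of i] unfolding irrefl_def by auto
    moreover have "total_on D (logic_action g R i)" unfolding LA total_on_def
    proof (intro ballI impI)
      fix x y assume "x \<in> D" "y \<in> D" "x \<noteq> y"
      then have "h x \<in> D" "h y \<in> D" "h x \<noteq> h y" using hD hinj by auto
      then show "(x, y) \<in> {(a,b). (h a, h b) \<in> R i} \<or> (y, x) \<in> {(a,b). (h a, h b) \<in> R i}"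
        using Ri(4)[of i] unfolding total_on_def by auto
    qed
    ultimately show ?thesis unfolding strict_linear_order_on_def by blast
  qed
  moreover have "(\<Inter>i. logic_action g R i) = prod_order_rel D"
  proof -
    have "(a,b) \<in> (\<Inter>i. logic_action g R i) \<longleftrightarrow> (a,b) \<in> prod_order_rel D" for a b
    proof -
      have "(a,b) \<in> (\<Inter>i. logic_action g R i) \<longleftrightarrow> (h a, h b) \<in> (\<Inter>i. R i)" unfolding LA by auto
      also have "\<dots> \<longleftrightarrow> h a \<in> D \<and> h b \<in> D \<and> prod_less (h a) (h b)" unfolding RI prod_order_rel_def by simp
      also have "\<dots> \<longleftrightarrow> a \<in> D \<and> b \<in> D \<and> prod_less a b" using hD hpl by blast
      finally show ?thesis unfolding prod_order_rel_def by simp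
    qed
    then show ?thesis by auto
  qed
  ultimately show ?thesis unfolding Rn_def by blast
qed

lemma action_id: "logic_action id R = R"
  unfolding logic_action_def by (simp add: inv_id)

lemma action_comp:
  assumes "g \<in> Aut D" "h \<in> Aut D"
  shows "logic_action (g \<circ> h) R = logic_action g (logic_action h R)"
proof -
  have "inv (g \<circ> h) = inv h \<circ> inv g" by (rule o_inv_distrib[OF Aut_bij[OF assms(1)] Aut_bij[OF assms(2)]])
  then show ?thesis unfolding logic_action_def by simp
qed




lemma action_trans:
  fixes D :: "('n::finite \<Rightarrow> rat) set"
  assumes dense: "dense_in_Qn D" and ncc: "no_common_coord D" and R: "R \<in> Rn D" and S: "S \<in> Rn D"
  shows "\<exists>g\<in>Aut D. logic_action g R = S"
proof -
  obtain t where t: "bij t" "R = (\<lambda>i. Crd D (t i))" using rigid[OF dense ncc R] by blast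
  obtain t' where t': "bij t'" "S = (\<lambda>i. Crd D (t' i))" using rigid[OF dense ncc S] by blast
  define p where "p = t' \<circ> inv t"
  have bp: "bij p" unfolding p_def using t(1) t'(1) by (simp add: bij_comp bij_imp_bij_inv)
  have pt: "p (t i) = t' i" for i unfolding p_def using t(1) by (simp add: bij_is_inj)
  obtain h where h: "bij_betw h D D" "\<And>x x' j. x \<in> D \<Longrightarrow> x' \<in> D \<Longrightarrow> x j < x' j \<longleftrightarrow> h x (p j) < h x' (p j)"
    using coord_iso[OF dense ncc bp] by blast
  define g where "g x = (if x \<in> D then h x else x)" for x
  have gD: "bij_betw g D D" using h(1) unfolding g_def by (rule bij_betw_cong[THEN iffD1, rotated]) simp
  have gh: "x \<in> D \<Longrightarrow> g x = h x" for x unfolding g_def by simp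
  have surjp: "\<forall>m. \<exists>j. m = p j" using bp by (metis bij_pointE)
  have gpl: "prod_less a b \<longleftrightarrow> prod_less (g a) (g b)" if ab: "a \<in> D" "b \<in> D" for a b
  proof -
    have gab: "g a \<in> D" "g b \<in> D" using gD ab bij_betwE by blast+
    have "prod_less a b \<longleftrightarrow> (\<forall>j. a j < b j)" using prod_less_iff[OF ncc ab] .
    also have "\<dots> \<longleftrightarrow> (\<forall>j. g a (p j) < g b (p j))" using h(2)[OF ab] gh ab by simp
    also have "\<dots> \<longleftrightarrow> (\<forall>m. g a m < g b m)" using surjp by metis
    also have "\<dots> \<longleftrightarrow> prod_less (g a) (g b)" using prod_less_iff[OF ncc gab] by simp
    finally show ?thesis .
  qed
  have gA: "g \<in> Aut D" unfolding Aut_def using gD gpl by (auto simp: g_def)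
  have "logic_action g R i = S i" for i
  proof -
    have "(a,b) \<in> logic_action g R i \<longleftrightarrow> (a,b) \<in> S i" for a b
    proof -
      have "(a,b) \<in> logic_action g R i \<longleftrightarrow> (inv g a, inv g b) \<in> Crd D (t i)"
        unfolding logic_action_def t(2) by simp
      also have "\<dots> \<longleftrightarrow> inv g a \<in> D \<and> inv g b \<in> D \<and> inv g a (t i) < inv g b (t i)" unfolding Crd_def by simp
      also have "\<dots> \<longleftrightarrow> a \<in> D \<and> b \<in> D \<and> a (t' i) < b (t' i)"
      proof (cases "a \<in> D \<and> b \<in> D")
        case True
        then have ii: "inv g a \<in> D" "inv g b \<in> D" using Aut_inv(3)[OF gA] by auto
        have "inv g a (t i) < inv g b (t i) \<longleftrightarrow> h (inv g a) (p (t i)) < h (inv g b) (p (t i))"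
          using h(2)[OF ii] .
        also have "\<dots> \<longleftrightarrow> a (t' i) < b (t' i)" using gh[OF ii(1)] gh[OF ii(2)] Aut_inv(1)[OF gA] pt by metis
        finally show ?thesis using ii True by blast
      next
        case False then show ?thesis using Aut_inv(3)[OF gA] by blast
      qed
      also have "\<dots> \<longleftrightarrow> (a,b) \<in> S i" unfolding t'(2) Crd_def by simp
      finally show ?thesis .
    qed
    then show ?thesis by auto
  qed
  then show ?thesis using gA by blast
qed




lemma topspace_AT: "topspace (Aut_topology D) = Aut D"
proof -
  have "restrict g D \<in> (\<Pi>\<^sub>E x\<in>D. D)" if "g \<in> Aut D" for g
    using Aut_inD[OF that] by auto
  then show ?thesis unfolding Aut_topology_def topspace_pullback_topology by auto
qed

lemma topspace_rel: "topspace (rel_topology D) = {r. r \<subseteq> D \<times> D}"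
  unfolding rel_topology_def topspace_pullback_topology by auto

lemma topspace_PT: "topspace (product_topology (\<lambda>_. rel_topology D) UNIV) = {R. \<forall>i. R i \<subseteq> D \<times> D}"
  unfolding topspace_product_topology topspace_rel by auto

lemma topspace_RT: "topspace (Rn_topology D) = Rn D"
  unfolding Rn_topology_def topspace_subtopology topspace_PT Rn_def by auto

lemma open_AT:
  assumes "x \<in> D" "y \<in> D"
  shows "openin (Aut_topology D) {g \<in> Aut D. g x = y}"
proof -
  let ?P = "product_topology (\<lambda>_. discrete_topology D) D"
  have "openin ?P {k \<in> topspace ?P. k x \<in> {y}}"
    by (rule openin_continuous_map_preimage[OF continuous_map_product_projection[OF assms(1)]]) (use assms in simp)
  moreover have "{g \<in> Aut D. g x = y} = (\<lambda>g. restrict g D) -` {k \<in> topspace ?P. k x \<in> {y}} \<inter> Aut D"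
  proof -
    have "restrict g D \<in> (\<Pi>\<^sub>E x\<in>D. D)" if "g \<in> Aut D" for g
      using Aut_inD[OF that] by auto
    then show ?thesis using assms(1) by auto
  qed
  ultimately show ?thesis unfolding Aut_topology_def openin_pullback_topology by blast
qed

lemma open_RT:
  assumes q: "q \<in> D \<times> D"
  shows "openin (Rn_topology D) {R \<in> Rn D. (q \<in> R i) = v}"
proof -
  let ?PT = "product_topology (\<lambda>_. rel_topology D) UNIV"
  let ?P2 = "product_topology (\<lambda>_. discrete_topology (UNIV::bool set)) (D \<times> D)"
  have c1: "continuous_map ?P2 (discrete_topology UNIV) (\<lambda>k. k q)"
    using continuous_map_product_projection[OF q] .
  have c2: "continuous_map (rel_topology D) (discrete_topology UNIV) ((\<lambda>k. k q) \<circ> (\<lambda>r. restrict (\<lambda>p. p \<in> r) (D \<times> D)))"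
    unfolding rel_topology_def using continuous_map_pullback[OF c1] .
  have c3: "continuous_map ?PT (discrete_topology UNIV) (((\<lambda>k. k q) \<circ> (\<lambda>r. restrict (\<lambda>p. p \<in> r) (D \<times> D))) \<circ> (\<lambda>R. R i))"
    using continuous_map_compose[OF continuous_map_product_projection[of i UNIV "\<lambda>_. rel_topology D", OF UNIV_I] c2] by simp
  have "openin ?PT {R \<in> topspace ?PT. (((\<lambda>k. k q) \<circ> (\<lambda>r. restrict (\<lambda>p. p \<in> r) (D \<times> D))) \<circ> (\<lambda>R. R i)) R \<in> {v}}"
    by (rule openin_continuous_map_preimage[OF c3]) simp
  moreover have "{R \<in> Rn D. (q \<in> R i) = v} = {R \<in> topspace ?PT. (((\<lambda>k. k q) \<circ> (\<lambda>r. restrict (\<lambda>p. p \<in> r) (D \<times> D))) \<circ> (\<lambda>R. R i)) R \<in> {v}} \<inter> Rn D"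
    using q unfolding Rn_def by (auto simp: topspace_rel)
  ultimately show ?thesis unfolding Rn_topology_def openin_subtopology by blast
qed

lemma action_cont:
  shows "continuous_map (prod_topology (Aut_topology D) (Rn_topology D)) (Rn_topology D)
        (\<lambda>(g, R). logic_action g R)"
proof -
  let ?X = "prod_topology (Aut_topology D) (Rn_topology D)"
  let ?PT = "product_topology (\<lambda>_. rel_topology D) UNIV"
  let ?P2 = "product_topology (\<lambda>_. discrete_topology (UNIV::bool set)) (D \<times> D)"
  let ?rho = "\<lambda>r. restrict (\<lambda>p. p \<in> r) (D \<times> D)"
  have tX: "topspace ?X = Aut D \<times> Rn D" by (simp add: topspace_AT topspace_RT)
  have img: "(\<lambda>(g, R). logic_action g R) ` topspace ?X \<subseteq> Rn D"
    using tX action_Rn by auto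
  have ci: "continuous_map ?X (rel_topology D) (\<lambda>x. (case x of (g, R) \<Rightarrow> logic_action g R) i)" for i
    unfolding rel_topology_def
  proof (rule continuous_map_pullback')
    show "topspace ?X \<subseteq> (\<lambda>x. (case x of (g, R) \<Rightarrow> logic_action g R) i) -` {r. r \<subseteq> D \<times> D}"
      using img unfolding Rn_def by auto
    show "continuous_map ?X ?P2 (?rho \<circ> (\<lambda>x. (case x of (g, R) \<Rightarrow> logic_action g R) i))"
      unfolding continuous_map_componentwise
    proof (intro conjI ballI)
      show "(?rho \<circ> (\<lambda>x. (case x of (g, R) \<Rightarrow> logic_action g R) i)) ` topspace ?X \<subseteq> extensional (D \<times> D)"
        by auto
      fix q assume q: "q \<in> D \<times> D"
      obtain a b where qab: "q = (a,b)" "a \<in> D" "b \<in> D" using q by auto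
      define f where "f x = (q \<in> (case x of (g, R) \<Rightarrow> logic_action g R) i)" for x
      have feq: "(\<lambda>x. (?rho \<circ> (\<lambda>x. (case x of (g, R) \<Rightarrow> logic_action g R) i)) x q) = f"
        unfolding f_def using q by auto
      have "continuous_map ?X (discrete_topology UNIV) f"
        unfolding continuous_map_def
      proof (intro conjI allI impI)
        show "f \<in> topspace ?X \<rightarrow> topspace (discrete_topology UNIV)" by simp
        fix W :: "bool set"
        show "openin ?X {x \<in> topspace ?X. f x \<in> W}"
        proof (subst openin_subopen, intro ballI)
          fix x assume x: "x \<in> {x \<in> topspace ?X. f x \<in> W}"
          obtain g R where gR: "x = (g, R)" "g \<in> Aut D" "R \<in> Rn D" using x tX by auto
          define a' where "a' = inv g a"
          define b' where "b' = inv g b"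
          have a'D: "a' \<in> D" "b' \<in> D" using Aut_inv(3)[OF gR(2)] qab a'_def b'_def by auto
          have ga: "g a' = a" "g b' = b" using Aut_inv(1)[OF gR(2)] a'_def b'_def by auto
          define T1 where "T1 = {h \<in> Aut D. h a' = a} \<inter> {h \<in> Aut D. h b' = b}"
          define T2 where "T2 = {R' \<in> Rn D. ((a',b') \<in> R' i) = ((a',b') \<in> R i)}"
          have o1: "openin (Aut_topology D) T1" unfolding T1_def
            using open_AT[OF a'D(1) qab(2)] open_AT[OF a'D(2) qab(3)] by (rule openin_Int)
          have o2: "openin (Rn_topology D) T2" unfolding T2_def using open_RT[of "(a',b')" D i "(a',b') \<in> R i"] a'D by simp
          have "openin ?X (T1 \<times> T2)" using o1 o2 by (simp add: openin_prod_Times_iff)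
          moreover have "x \<in> T1 \<times> T2" using gR ga unfolding T1_def T2_def by simp
          moreover have "T1 \<times> T2 \<subseteq> {x \<in> topspace ?X. f x \<in> W}"
          proof
            fix y assume y: "y \<in> T1 \<times> T2"
            then obtain h R' where hR: "y = (h, R')" "h \<in> T1" "R' \<in> T2" by auto
            have hA: "h \<in> Aut D" and hab: "h a' = a" "h b' = b" using hR(2) unfolding T1_def by auto
            have "inv h a = a'" "inv h b = b'" using Aut_inv(2)[OF hA, of a'] Aut_inv(2)[OF hA, of b'] hab by simp_all
            then have "f y = ((a',b') \<in> R' i)" unfolding f_def hR(1) qab(1) logic_action_def by simp
            also have "\<dots> = ((a',b') \<in> R i)" using hR(3) unfolding T2_def by simp
            also have "\<dots> = f x" unfolding f_def gR(1) qab(1) logic_action_def a'_def b'_def by simp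
            finally have "f y \<in> W" using x by simp
            moreover have "y \<in> topspace ?X" using hR hA unfolding T2_def tX by auto
            ultimately show "y \<in> {x \<in> topspace ?X. f x \<in> W}" by simp
          qed
          ultimately show "\<exists>T. openin ?X T \<and> x \<in> T \<and> T \<subseteq> {x \<in> topspace ?X. f x \<in> W}" by blast
        qed
      qed
      then show "continuous_map ?X (discrete_topology UNIV) (\<lambda>x. (?rho \<circ> (\<lambda>x. (case x of (g, R) \<Rightarrow> logic_action g R) i)) x q)"
        using feq by simp
    qed
  qed
  have cP: "continuous_map ?X ?PT (\<lambda>(g, R). logic_action g R)"
    unfolding continuous_map_componentwise_UNIV by (intro allI ci)
  have img2: "(\<lambda>(g,R). logic_action g R) \<in> topspace ?X \<rightarrow> Rn D" using img by blast
  have "continuous_map ?X (subtopology ?PT (Rn D)) (\<lambda>(g,R). logic_action g R)"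
    by (simp only: continuous_map_in_subtopology) (intro conjI cP img2)
  then show ?thesis by (simp only: Rn_topology_def)
qed

theorem lemma6p6:
  fixes D :: "('n::finite \<Rightarrow> rat) set"
  assumes "CARD('n) \<ge> 2"
    and "dense_in_Qn D"
    and "no_common_coord D"
  shows "(\<forall>g\<in>Aut D. \<forall>R\<in>Rn D. logic_action g R \<in> Rn D)
    \<and> (\<forall>R\<in>Rn D. logic_action id R = R)
    \<and> (\<forall>g\<in>Aut D. \<forall>h\<in>Aut D. \<forall>R\<in>Rn D. logic_action (g \<circ> h) R = logic_action g (logic_action h R))
    \<and> continuous_map (prod_topology (Aut_topology D) (Rn_topology D)) (Rn_topology D)
        (\<lambda>(g, R). logic_action g R)
    \<and> (\<forall>R\<in>Rn D. \<forall>S\<in>Rn D. \<exists>g\<in>Aut D. logic_action g R = S)"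
proof (intro conjI ballI)
  show "logic_action g R \<in> Rn D" if "g \<in> Aut D" "R \<in> Rn D" for g R
    using action_Rn that by blast
  show "logic_action id R = R" for R by (rule action_id)
  show "logic_action (g \<circ> h) R = logic_action g (logic_action h R)" if "g \<in> Aut D" "h \<in> Aut D" for g h R
    using action_comp that by blast
  show "continuous_map (prod_topology (Aut_topology D) (Rn_topology D)) (Rn_topology D)
        (\<lambda>(g, R). logic_action g R)" by (rule action_cont)
  show "\<exists>g\<in>Aut D. logic_action g R = S" if "R \<in> Rn D" "S \<in> Rn D" for R S
    using action_trans[OF assms(2,3) that] .
qed

end
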